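(* Let $n,p\in\mathbb{N}$ with $p\ge1$ and $n\ge p+1$, and let $\bm\alpha=(\alpha_0,\dots,\alpha_p)\in\mathbb{R}^{p+1}$. For $j=1,\dots,n$ let $\bm u_j$ have components $u_{i,j}=\sqrt{\tfrac{4}{2n+1}}\sin\!\big(\tfrac{i(2j-1)\pi}{2n+1}\big)$, $i=1,\dots,n$. Then $\big(T_n^{\bm\alpha}+H_n^{\bm\alpha,2,1}\big)\bm u_j=\lambda_j\bm u_j$ with $\lambda_j=g_p^{\bm\alpha}\big(\tfrac{(2j-1)\pi}{2n+1}\big)$, and these are all the eigenvalues of $T_n^{\bm\alpha}+H_n^{\bm\alpha,2,1}$.
   Context: Convention $\alpha_k=0$ for $k>p$. $T_n^{\bm\alpha}$ is the $n\times n$ symmetric banded Toeplitz matrix with $(T_n^{\bm\alpha})_{i,j}=\alpha_{|i-j|}$. $H_n^{\bm\alpha,2,1}$ is the $n\times n$ matrix with $(H_n^{\bm\alpha,2,1})_{i,j}=-\alpha_{i+j}+\alpha_{2n+1-i-j}$ (so its top-left corner is $-\alpha_2,-\alpha_3,\dots$ on successive antidiagonals and its bottom-right corner is $\alpha_1,\alpha_2,\dots$). $g_p^{\bm\alpha}(\theta)=\alpha_0+2\sum_{k=1}^p\alpha_k\cos(k\theta)$. *)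

theory Defs
  imports "Jordan_Normal_Form.Matrix" "Jordan_Normal_Form.Char_Poly"
begin

definition alpha_ext :: "nat \<Rightarrow> (nat \<Rightarrow> real) \<Rightarrow> nat \<Rightarrow> real" where
  "alpha_ext p \<alpha> k = (if k \<le> p then \<alpha> k else 0)"

(* T_n^alpha; JNF matrices are 0-indexed, entry (i,j) here is entry (i+1,j+1) of the paper *)
definition toep :: "nat \<Rightarrow> nat \<Rightarrow> (nat \<Rightarrow> real) \<Rightarrow> real mat" where
  "toep n p \<alpha> = mat n n (\<lambda>(i,j). alpha_ext p \<alpha> (if j \<le> i then i - j else j - i))"

(* H_n^{alpha,2,1}: paper entry (i',j') = -alpha_{i'+j'} + alpha_{2n+1-i'-j'} with i'=i+1, j'=j+1 *)
definition hank :: "nat \<Rightarrow> nat \<Rightarrow> (nat \<Rightarrow> real) \<Rightarrow> real mat" where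
  "hank n p \<alpha> = mat n n (\<lambda>(i,j). - alpha_ext p \<alpha> ((i+1) + (j+1))
                                    + alpha_ext p \<alpha> (2*n + 1 - (i+1) - (j+1)))"

definition symbol_g :: "nat \<Rightarrow> (nat \<Rightarrow> real) \<Rightarrow> real \<Rightarrow> real" where
  "symbol_g p \<alpha> \<theta> = \<alpha> 0 + 2 * (\<Sum>k=1..p. \<alpha> k * cos (real k * \<theta>))"

(* eigenvector u_j (j = 1..n); component index i (0-based) corresponds to paper index i+1 *)
definition u_vec :: "nat \<Rightarrow> nat \<Rightarrow> real vec" where
  "u_vec n j = vec n (\<lambda>i. sqrt (4 / (2 * real n + 1)) *
       sin (real (i+1) * (2 * real j - 1) * pi / (2 * real n + 1)))"

end

theory Submission
  imports Defs
begin

lemma sym_sum: fixes h :: "int \<Rightarrow> real"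
  shows "(\<Sum>k\<in>{-int p..int p}. h k) = h 0 + (\<Sum>k=1..p. h (int k) + h (- int k))"
proof (induction p)
  case 0 then show ?case by simp
next
  case (Suc p)
  have e: "{-int (Suc p)..int (Suc p)} = insert (int p + 1) (insert (-int p - 1) {-int p..int p})" by auto
  have m: "-int p - 1 = - int (Suc p)" by simp
  show ?case unfolding e m using Suc by (simp add: sum.insert algebra_simps)
qed

lemma core:
  fixes s a :: "int \<Rightarrow> real" and n p i :: nat
  assumes np: "p+1 \<le> n" and i: "i < n"
    and s_sym: "\<And>c::int. s (2*int n+1-c) = s c" and s_neg: "\<And>c. s (-c) = - s c"
    and a_def: "\<And>k. a k = alpha_ext p \<alpha> (nat \<bar>k\<bar>)"
  shows "(\<Sum>c<n. (a (int i - int c) - a (int i + int c + 2) + a (2*int n - 1 - int i - int c)) * s (int c + 1))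
     = (\<Sum>k\<in>{-int p..int p}. a k * s (int i + 1 - k))"
proof -
  define F where "F c = a (int i + 1 - c) * s c" for c
  have s0: "s 0 = 0" using s_neg[of 0] by simp
  have aneg: "a (-k) = a k" for k using a_def by simp
  have "(\<Sum>c<n. (a (int i - int c) - a (int i + int c + 2) + a (2*int n - 1 - int i - int c)) * s (int c + 1))
      = (\<Sum>c<n. F (int c + 1) + F (- int c - 1) + F (2 * int n - int c))"
  proof (rule sum.cong[OF refl])
    fix c assume "c \<in> {..<n}"
    have 1: "F (- int c - 1) = - a (int i + int c + 2) * s (int c + 1)"
    proof -
      have "- int c - 1 = - (int c + 1)" by simp
      then have "s (- int c - 1) = - s (int c + 1)" using s_neg[of "int c + 1"] by metis
      then show ?thesis unfolding F_def by (simp add: algebra_simps)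
    qed
    have 2: "F (2 * int n - int c) = a (2*int n - 1 - int i - int c) * s (int c + 1)"
      unfolding F_def using s_sym[of "int c + 1"] aneg[of "int i + 1 - (2 * int n - int c)"]
      by (simp add: algebra_simps)
    show "(a (int i - int c) - a (int i + int c + 2) + a (2*int n - 1 - int i - int c)) * s (int c + 1)
       = F (int c + 1) + F (- int c - 1) + F (2 * int n - int c)"
      unfolding 1 2 by (simp add: F_def algebra_simps)
  qed
  also have "\<dots> = (\<Sum>c<n. F (int c + 1)) + (\<Sum>c<n. F (- int c - 1)) + (\<Sum>c<n. F (2 * int n - int c))"
    by (simp add: sum.distrib)
  also have "(\<Sum>c<n. F (int c + 1)) = (\<Sum>c\<in>{1..int n}. F c)"
    by (rule sum.reindex_bij_witness[of _ "\<lambda>c. nat (c - 1)" "\<lambda>c. int c + 1"]) auto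
  also have "(\<Sum>c<n. F (- int c - 1)) = (\<Sum>c\<in>{-int n..-1}. F c)"
    by (rule sum.reindex_bij_witness[of _ "\<lambda>c. nat (- c - 1)" "\<lambda>c. - int c - 1"]) auto
  also have "(\<Sum>c<n. F (2 * int n - int c)) = (\<Sum>c\<in>{int n + 1..2 * int n}. F c)"
    by (rule sum.reindex_bij_witness[of _ "\<lambda>c. nat (2 * int n - c)" "\<lambda>c. 2 * int n - int c"]) auto
  also have "(\<Sum>c\<in>{1..int n}. F c) + (\<Sum>c\<in>{-int n..-1}. F c) + (\<Sum>c\<in>{int n + 1..2 * int n}. F c)
      = (\<Sum>c\<in>{-int n..-1} \<union> ({0} \<union> ({1..int n} \<union> {int n + 1..2 * int n})). F c)"
    by (subst sum.union_disjoint, simp, simp, force)+ (simp add: F_def s0)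
  also have "{-int n..-1} \<union> ({0} \<union> ({1..int n} \<union> {int n + 1..2 * int n})) = {-int n..2 * int n}" by auto
  also have "(\<Sum>c\<in>{-int n..2 * int n}. F c) = (\<Sum>c\<in>{int i + 1 - int p..int i + 1 + int p}. F c)"
    by (rule sum.mono_neutral_right) (use np i in \<open>auto simp: F_def a_def alpha_ext_def\<close>)
  also have "\<dots> = (\<Sum>k\<in>{-int p..int p}. a k * s (int i + 1 - k))"
    by (rule sum.reindex_bij_witness[of _ "\<lambda>k. int i + 1 - k" "\<lambda>c. int i + 1 - c"]) (auto simp: F_def)
  finally show ?thesis .
qed

lemma trig:
  fixes a :: "int \<Rightarrow> real" and r :: int
  assumes a_def: "\<And>k. a k = alpha_ext p \<alpha> (nat \<bar>k\<bar>)"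
  shows "(\<Sum>k\<in>{-int p..int p}. a k * sin (of_int (r - k) * \<theta>)) = symbol_g p \<alpha> \<theta> * sin (of_int r * \<theta>)"
proof -
  have "(\<Sum>k\<in>{-int p..int p}. a k * sin (of_int (r - k) * \<theta>))
     = a 0 * sin (of_int r * \<theta>) + (\<Sum>k=1..p. a (int k) * sin (of_int (r - int k) * \<theta>) + a (- int k) * sin (of_int (r - - int k) * \<theta>))"
    using sym_sum[of "\<lambda>k. a k * sin (of_int (r - k) * \<theta>)" p] by simp
  also have "\<dots> = \<alpha> 0 * sin (of_int r * \<theta>) + (\<Sum>k=1..p. 2 * \<alpha> k * cos (real k * \<theta>) * sin (of_int r * \<theta>))"
  proof -
    have "a (int k) * sin (of_int (r - int k) * \<theta>) + a (- int k) * sin (of_int (r - - int k) * \<theta>)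
        = 2 * \<alpha> k * cos (real k * \<theta>) * sin (of_int r * \<theta>)" if "k \<in> {1..p}" for k
    proof -
      have "a (int k) = \<alpha> k" "a (- int k) = \<alpha> k" using that by (auto simp: a_def alpha_ext_def)
      moreover have "sin (of_int (r - int k) * \<theta>) + sin (of_int (r - - int k) * \<theta>) = 2 * cos (real k * \<theta>) * sin (of_int r * \<theta>)"
        by (simp add: sin_diff sin_add algebra_simps)
      ultimately show ?thesis by (simp add: algebra_simps) (metis distrib_left mult.assoc mult.commute)
    qed
    moreover have "a 0 = \<alpha> 0" by (simp add: a_def alpha_ext_def)
    ultimately show ?thesis by simp
  qed
  also have "\<dots> = symbol_g p \<alpha> \<theta> * sin (of_int r * \<theta>)"
    unfolding symbol_g_def by (simp add: algebra_simps sum_distrib_left sum_distrib_right)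
  finally show ?thesis .
qed

lemma s_sym:
  fixes n j :: nat and c :: int
  assumes "j \<ge> 1"
  shows "sin (of_int (2 * int n + 1 - c) * ((2 * real j - 1) * pi / (2 * real n + 1)))
       = sin (of_int c * ((2 * real j - 1) * pi / (2 * real n + 1)))"
proof -
  define x where "x = of_int c * ((2 * real j - 1) * pi / (2 * real n + 1))"
  obtain m where m: "j = Suc m" using assms by (cases j) auto
  have e: "of_int (2 * int n + 1 - c) * ((2 * real j - 1) * pi / (2 * real n + 1)) = real (2*m + 1) * pi - x"
    unfolding x_def m by (simp add: field_simps)
  have "sin (real (2*m + 1) * pi - x) = sin x"
    by (simp only: sin_diff sin_npi cos_npi) simp
  then show ?thesis unfolding x_def[symmetric] e .
qed

lemma eig:
  fixes n p :: nat and \<alpha> :: "nat \<Rightarrow> real"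
  assumes np: "p + 1 \<le> n" and j: "j \<in> {1..n}"
  shows "(toep n p \<alpha> + hank n p \<alpha>) *\<^sub>v u_vec n j
       = symbol_g p \<alpha> ((2 * real j - 1) * pi / (2 * real n + 1)) \<cdot>\<^sub>v u_vec n j"
proof (rule eq_vecI)
  define \<theta> where "\<theta> = (2 * real j - 1) * pi / (2 * real n + 1)"
  define s where "s c = sin (of_int c * \<theta>)" for c :: int
  define a where "a k = alpha_ext p \<alpha> (nat \<bar>k\<bar>)" for k :: int
  define K where "K = sqrt (4 / (2 * real n + 1))"
  define M where "M = toep n p \<alpha> + hank n p \<alpha>"
  show "dim_vec (M *\<^sub>v u_vec n j) = dim_vec (symbol_g p \<alpha> \<theta> \<cdot>\<^sub>v u_vec n j)"
    by (simp add: M_def toep_def hank_def u_vec_def)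
  fix i assume "i < dim_vec (symbol_g p \<alpha> \<theta> \<cdot>\<^sub>v u_vec n j)"
  then have i: "i < n" by (simp add: u_vec_def)
  have u: "u_vec n j $ c = K * s (int c + 1)" if "c < n" for c
    using that unfolding u_vec_def K_def s_def \<theta>_def by (simp add: field_simps)
  have Me: "M $$ (i, c) = a (int i - int c) - a (int i + int c + 2) + a (2*int n - 1 - int i - int c)"
    if "c < n" for c
  proof -
    have 1: "nat \<bar>int i - int c\<bar> = (if c \<le> i then i - c else c - i)" by auto
    have 2: "nat \<bar>int i + int c + 2\<bar> = i + 1 + (c + 1)" by auto
    have 3: "nat \<bar>2*int n - 1 - int i - int c\<bar> = 2 * n + 1 - (i + 1) - (c + 1)" using i that by auto
    show ?thesis unfolding M_def a_def 1 2 3 using i that by (simp add: toep_def hank_def)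
  qed
  have "(M *\<^sub>v u_vec n j) $ i = (\<Sum>c\<in>{0..<n}. M $$ (i, c) * u_vec n j $ c)"
    using i by (simp add: M_def toep_def hank_def u_vec_def scalar_prod_def)
  also have "\<dots> = K * (\<Sum>c<n. (a (int i - int c) - a (int i + int c + 2) + a (2*int n - 1 - int i - int c)) * s (int c + 1))"
    by (simp add: Me u sum_distrib_left atLeast0LessThan algebra_simps)
  also have "(\<Sum>c<n. (a (int i - int c) - a (int i + int c + 2) + a (2*int n - 1 - int i - int c)) * s (int c + 1))
      = (\<Sum>k\<in>{-int p..int p}. a k * s (int i + 1 - k))"
  proof (rule core[OF np i])
    show "s (2 * int n + 1 - c) = s c" for c using s_sym[of j n c] j unfolding s_def \<theta>_def by simp
    show "s (- c) = - s c" for c unfolding s_def by simp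
    show "a k = alpha_ext p \<alpha> (nat \<bar>k\<bar>)" for k by (rule a_def)
  qed
  also have "\<dots> = symbol_g p \<alpha> \<theta> * s (int i + 1)"
    unfolding s_def by (rule trig) (rule a_def)
  finally show "(M *\<^sub>v u_vec n j) $ i = (symbol_g p \<alpha> \<theta> \<cdot>\<^sub>v u_vec n j) $ i"
    using i u[OF i] by (simp add: u_vec_def[of n j] del: u_vec_def)
qed

lemma theta_range:
  fixes n j :: nat assumes "j \<in> {1..n}"
  shows "0 < (2 * real j - 1) * pi / (2 * real n + 1)" "(2 * real j - 1) * pi / (2 * real n + 1) < pi"
proof -
  have h: "0 < 2 * real j - 1" "2 * real j - 1 < 2 * real n + 1" using assms by auto
  then show "0 < (2 * real j - 1) * pi / (2 * real n + 1)" by simp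
  have "(2 * real j - 1) * pi < (2 * real n + 1) * pi" using h by simp
  then show "(2 * real j - 1) * pi / (2 * real n + 1) < pi" by (simp add: pos_divide_less_eq)
qed

lemma u_carrier: "u_vec n j \<in> carrier_vec n" by (simp add: u_vec_def)

lemma u0: assumes "j \<in> {1..n}" shows "u_vec n j $ 0 > 0"
proof -
  have "n > 0" using assms by auto
  moreover have "sin ((2 * real j - 1) * pi / (2 * real n + 1)) > 0"
    using theta_range[OF assms] by (intro sin_gt_zero) auto
  ultimately show ?thesis by (simp add: u_vec_def)
qed

lemma u_nz: assumes "j \<in> {1..n}" shows "u_vec n j \<noteq> 0\<^sub>v n"
proof
  assume "u_vec n j = 0\<^sub>v n"
  then have "u_vec n j $ 0 = 0\<^sub>v n $ 0" by simp
  also have "\<dots> = 0" using assms by simp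
  finally show False using u0[OF assms] by simp
qed

lemma u_self: assumes "j \<in> {1..n}" shows "u_vec n j \<bullet> u_vec n j > 0"
proof -
  have n: "n > 0" using assms by auto
  have "u_vec n j $ 0 * u_vec n j $ 0 \<le> (\<Sum>i\<in>{0..<n}. u_vec n j $ i * u_vec n j $ i)"
    by (rule member_le_sum) (use n in auto)
  moreover have "u_vec n j $ 0 * u_vec n j $ 0 > 0" using u0[OF assms] by simp
  moreover have "dim_vec (u_vec n j) = n" by (simp add: u_vec_def)
  ultimately show ?thesis unfolding scalar_prod_def by simp
qed

lemma M_carrier: "toep n p \<alpha> + hank n p \<alpha> \<in> carrier_mat n n"
  by (simp add: toep_def hank_def)

lemma M_sym: "transpose_mat (toep n p \<alpha> + hank n p \<alpha>) = toep n p \<alpha> + hank n p \<alpha>"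
  by (rule eq_matI) (auto simp: toep_def hank_def add.commute)

lemma sym_scalar:
  fixes M :: "real mat"
  assumes M: "M \<in> carrier_mat n n" and s: "transpose_mat M = M"
    and x: "x \<in> carrier_vec n" and y: "y \<in> carrier_vec n"
  shows "(M *\<^sub>v x) \<bullet> y = x \<bullet> (M *\<^sub>v y)"
  using transpose_vec_mult_scalar[OF M y x] s by simp

lemma eig_scalar:
  fixes n p :: nat and \<alpha> :: "nat \<Rightarrow> real" and v :: "real vec"
  assumes np: "p + 1 \<le> n" and j: "j \<in> {1..n}" and v: "v \<in> carrier_vec n"
    and ev: "(toep n p \<alpha> + hank n p \<alpha>) *\<^sub>v v = e \<cdot>\<^sub>v v"
  shows "symbol_g p \<alpha> ((2 * real j - 1) * pi / (2 * real n + 1)) * (u_vec n j \<bullet> v) = e * (u_vec n j \<bullet> v)"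
proof -
  let ?M = "toep n p \<alpha> + hank n p \<alpha>"
  have "((?M) *\<^sub>v u_vec n j) \<bullet> v = u_vec n j \<bullet> (?M *\<^sub>v v)"
    by (rule sym_scalar[OF M_carrier M_sym u_carrier v])
  then show ?thesis unfolding eig[OF np j] ev
    using u_carrier v by (simp add: smult_scalar_prod_distrib scalar_prod_smult_distrib)
qed

lemma orth:
  assumes n: "2 \<le> n" and j: "j \<in> {1..n}" and k: "k \<in> {1..n}" and jk: "j \<noteq> k"
  shows "u_vec n j \<bullet> u_vec n k = 0"
proof -
  define e where "e = (\<lambda>i::nat. if i = 1 then (1::real) else 0)"
  define tj where "tj = (2 * real j - 1) * pi / (2 * real n + 1)"
  define tk where "tk = (2 * real k - 1) * pi / (2 * real n + 1)"
  have gj: "symbol_g 1 e tj = 2 * cos tj" by (simp add: symbol_g_def e_def)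
  have gk: "symbol_g 1 e tk = 2 * cos tk" by (simp add: symbol_g_def e_def)
  have "tj \<noteq> tk" unfolding tj_def tk_def using jk by (simp add: field_simps)
  then have "cos tj \<noteq> cos tk"
    using theta_range[OF j] theta_range[OF k] cos_inj_pi[of tj tk] unfolding tj_def tk_def by auto
  moreover have "symbol_g 1 e tj * (u_vec n j \<bullet> u_vec n k) = symbol_g 1 e tk * (u_vec n j \<bullet> u_vec n k)"
    unfolding tj_def tk_def by (rule eig_scalar[OF _ j u_carrier eig]) (use n k in auto)
  then have "2 * cos tj * (u_vec n j \<bullet> u_vec n k) = 2 * cos tk * (u_vec n j \<bullet> u_vec n k)"
    unfolding gj gk .
  ultimately show ?thesis by simp
qed

lemma ev_in:
  fixes n p :: nat and \<alpha> :: "nat \<Rightarrow> real"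
  assumes np: "p + 1 \<le> n" and p: "p \<ge> 1" and ev: "eigenvalue (toep n p \<alpha> + hank n p \<alpha>) e"
  shows "\<exists>j\<in>{1..n}. e = symbol_g p \<alpha> ((2 * real j - 1) * pi / (2 * real n + 1))"
proof (rule ccontr)
  assume neq: "\<not> ?thesis"
  let ?M = "toep n p \<alpha> + hank n p \<alpha>"
  have dr: "dim_row ?M = n" by (simp add: toep_def hank_def)
  obtain v where v: "v \<in> carrier_vec n" "v \<noteq> 0\<^sub>v n" "?M *\<^sub>v v = e \<cdot>\<^sub>v v"
    using ev unfolding eigenvalue_def eigenvector_def dr by blast
  have z: "u_vec n j \<bullet> v = 0" if j: "j \<in> {1..n}" for j
  proof -
    have "symbol_g p \<alpha> ((2 * real j - 1) * pi / (2 * real n + 1)) * (u_vec n j \<bullet> v) = e * (u_vec n j \<bullet> v)"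
      by (rule eig_scalar[OF np j v(1) v(3)])
    moreover have "symbol_g p \<alpha> ((2 * real j - 1) * pi / (2 * real n + 1)) \<noteq> e" using neq j by auto
    ultimately show ?thesis by simp
  qed
  define W where "W = mat n n (\<lambda>(j,i). u_vec n (j+1) $ i)"
  have Wc: "W \<in> carrier_mat n n" by (simp add: W_def)
  have rW: "row W j = u_vec n (j+1)" if "j < n" for j
    by (rule eq_vecI) (use that in \<open>auto simp: W_def u_vec_def\<close>)
  have "W *\<^sub>v v = 0\<^sub>v n"
    by (rule eq_vecI) (use Wc in \<open>auto simp: rW z\<close>)
  then have dW: "det W = 0" using det_0_iff_vec_prod_zero_field[OF Wc] v by blast
  define D where "D = W * transpose_mat W"
  have Dc: "D \<in> carrier_mat n n" using Wc by (simp add: D_def)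
  have De: "D $$ (j, k) = u_vec n (j+1) \<bullet> u_vec n (k+1)" if "j < n" "k < n" for j k
    using that Wc by (simp add: D_def rW)
  have "det D = det W * det (transpose_mat W)" unfolding D_def by (rule det_mult[OF Wc]) (use Wc in simp)
  then have "det D = 0" using dW by simp
  moreover have "upper_triangular D"
    unfolding upper_triangular_def using Dc by (auto simp: De intro!: orth)
  then have "det D = prod_list (diag_mat D)" by (rule det_upper_triangular[OF _ Dc])
  moreover have "0 \<notin> set (diag_mat D)"
  proof -
    have pos: "u_vec n (Suc x) \<bullet> u_vec n (Suc x) > 0" if "x < n" for x by (rule u_self) (use that in auto)
    show ?thesis using Dc pos by (auto simp: diag_mat_def De) (metis less_irrefl)
  qed
  ultimately show False by (simp add: prod_list_zero_iff)
qed

theorem mainTheorem9: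
  fixes n p :: nat and \<alpha> :: "nat \<Rightarrow> real"
  assumes "p \<ge> 1" and "n \<ge> p + 1"
  shows "(\<forall>j\<in>{1..n}. (toep n p \<alpha> + hank n p \<alpha>) *\<^sub>v u_vec n j
            = symbol_g p \<alpha> ((2 * real j - 1) * pi / (2 * real n + 1)) \<cdot>\<^sub>v u_vec n j)
       \<and> {ev. eigenvalue (toep n p \<alpha> + hank n p \<alpha>) ev}
           = {symbol_g p \<alpha> ((2 * real j - 1) * pi / (2 * real n + 1)) | j. j \<in> {1..n}}"
proof (intro conjI ballI equalityI subsetI)
  fix j assume "j \<in> {1..n}"
  then show "(toep n p \<alpha> + hank n p \<alpha>) *\<^sub>v u_vec n j
            = symbol_g p \<alpha> ((2 * real j - 1) * pi / (2 * real n + 1)) \<cdot>\<^sub>v u_vec n j"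
    using eig assms by blast
next
  fix e assume "e \<in> {ev. eigenvalue (toep n p \<alpha> + hank n p \<alpha>) ev}"
  then show "e \<in> {symbol_g p \<alpha> ((2 * real j - 1) * pi / (2 * real n + 1)) | j. j \<in> {1..n}}"
    using ev_in[of p n \<alpha> e] assms by auto
next
  fix e assume "e \<in> {symbol_g p \<alpha> ((2 * real j - 1) * pi / (2 * real n + 1)) | j. j \<in> {1..n}}"
  then obtain j where j: "j \<in> {1..n}" and e: "e = symbol_g p \<alpha> ((2 * real j - 1) * pi / (2 * real n + 1))" by auto
  have dr: "dim_row (toep n p \<alpha> + hank n p \<alpha>) = n" by (simp add: toep_def hank_def)
  have "eigenvector (toep n p \<alpha> + hank n p \<alpha>) (u_vec n j) e"
    unfolding eigenvector_def dr e using u_carrier u_nz[OF j] eig[OF _ j] assms by auto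
  then show "e \<in> {ev. eigenvalue (toep n p \<alpha> + hank n p \<alpha>) ev}" unfolding eigenvalue_def by auto
qed

end
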